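(* Let $X$ be a Banach space. If $X$ contains a ccs Daugavet point, then $X$ has the strong diameter 2 property (every convex combination of slices of $B_X$ has diameter $2$); in particular $X$ is not strongly regular.
   Context: $X$ is a real or complex Banach space with closed unit ball $B_X$ and unit sphere $S_X$. A slice of $B_X$ is a non-empty set $S(x^*,\delta)=\{y\in B_X:\operatorname{Re}x^*(y)>\|x^*\|-\delta\}$ with $x^*\in X^*$, $\delta>0$. A convex combination of slices (ccs) of $B_X$ is a set $\sum_{i=1}^n\lambda_iS_i$ where $\lambda_i\in(0,1]$, $\sum_i\lambda_i=1$ and each $S_i$ is a slice of $B_X$. An element $x\in S_X$ is a ccs Daugavet point if $\sup_{y\in C}\|x-y\|=2$ for every ccs $C$ of $B_X$. $X$ is strongly regular if every non-empty closed bounded convex subset of $X$ contains convex combinations of its slices of arbitrarily small diameter. *)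

theory Defs
  imports "HOL-Analysis.Analysis"
begin

text \<open>Banach space X: a type of class banach (real scalars; a complex Banach
space is in particular a real Banach space, and slices defined via Re x* coincide
with slices defined via real functionals of the same norm).\<close>

definition ball_slice :: "('a::real_normed_vector \<Rightarrow> real) \<Rightarrow> real \<Rightarrow> 'a set" where
  "ball_slice f \<delta> = {y. norm y \<le> 1 \<and> f y > onorm f - \<delta>}"

definition is_ccs_ball :: "'a::real_normed_vector set \<Rightarrow> bool" where
  "is_ccs_ball C \<longleftrightarrow> (\<exists>(n::nat) (l::nat \<Rightarrow> real) (f::nat \<Rightarrow> 'a \<Rightarrow> real) (d::nat \<Rightarrow> real).
     n \<ge> 1 \<and> (\<forall>i<n. 0 < l i \<and> l i \<le> 1) \<and> (\<Sum>i<n. l i) = 1 \<and>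
     (\<forall>i<n. bounded_linear (f i) \<and> d i > 0 \<and> ball_slice (f i) (d i) \<noteq> {}) \<and>
     C = {(\<Sum>i<n. l i *\<^sub>R y i) | y. \<forall>i<n. y i \<in> ball_slice (f i) (d i)})"

definition ccs_daugavet_point :: "'a::real_normed_vector \<Rightarrow> bool" where
  "ccs_daugavet_point x \<longleftrightarrow> norm x = 1 \<and>
     (\<forall>C. is_ccs_ball C \<longrightarrow> (SUP y\<in>C. norm (x - y)) = 2)"

definition strong_diameter_two :: "'a::real_normed_vector itself \<Rightarrow> bool" where
  "strong_diameter_two _ \<longleftrightarrow> (\<forall>C::'a set. is_ccs_ball C \<longrightarrow> diameter C = 2)"

definition set_slice :: "'a::real_normed_vector set \<Rightarrow> ('a \<Rightarrow> real) \<Rightarrow> real \<Rightarrow> 'a set" where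
  "set_slice K f \<delta> = {y\<in>K. f y > (SUP z\<in>K. f z) - \<delta>}"

definition is_ccs_of :: "'a::real_normed_vector set \<Rightarrow> 'a set \<Rightarrow> bool" where
  "is_ccs_of K C \<longleftrightarrow> (\<exists>(n::nat) (l::nat \<Rightarrow> real) (f::nat \<Rightarrow> 'a \<Rightarrow> real) (d::nat \<Rightarrow> real).
     n \<ge> 1 \<and> (\<forall>i<n. 0 < l i \<and> l i \<le> 1) \<and> (\<Sum>i<n. l i) = 1 \<and>
     (\<forall>i<n. bounded_linear (f i) \<and> d i > 0 \<and> set_slice K (f i) (d i) \<noteq> {}) \<and>
     C = {(\<Sum>i<n. l i *\<^sub>R y i) | y. \<forall>i<n. y i \<in> set_slice K (f i) (d i)})"

definition strongly_regular :: "'a::real_normed_vector itself \<Rightarrow> bool" where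
  "strongly_regular _ \<longleftrightarrow> (\<forall>K::'a set. K \<noteq> {} \<and> closed K \<and> bounded K \<and> convex K \<longrightarrow>
     (\<forall>\<epsilon>>0. \<exists>C. is_ccs_of K C \<and> C \<subseteq> K \<and> diameter C < \<epsilon>))"

end

theory Submission
  imports Defs
begin

lemma split_sum2: "(\<Sum>i<(n::nat)+n. g i) = (\<Sum>i<n. g i) + (\<Sum>i<n. g (i + n))"
proof -
  have "(\<Sum>i<n+n. g i) = sum g {0..<n} + sum g {n..<n+n}"
    using sum.atLeastLessThan_concat[of 0 n "n+n" g] by (simp add: lessThan_atLeast0)
  also have "sum g {n..<n+n} = (\<Sum>i<n. g (i + n))"
    using sum.shift_bounds_nat_ivl[of g 0 n n] by (simp add: lessThan_atLeast0)
  finally show ?thesis by (simp add: lessThan_atLeast0)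
qed

lemma neg_slice:
  assumes "bounded_linear f"
  shows "y \<in> ball_slice (\<lambda>z. - f z) d \<longleftrightarrow> - y \<in> ball_slice f d"
proof -
  interpret f: bounded_linear f by fact
  show ?thesis unfolding ball_slice_def onorm_neg by (auto simp: f.neg)
qed

lemma ccs_norm:
  assumes "\<forall>i<n. 0 < l i \<and> l i \<le> 1" "(\<Sum>i<n. l i) = (1::real)"
    "\<forall>i<n. norm (y i) \<le> (1::real)"
  shows "norm (\<Sum>i<n. l i *\<^sub>R (y i :: 'a::real_normed_vector)) \<le> 1"
proof -
  have "norm (\<Sum>i<n. l i *\<^sub>R y i) \<le> (\<Sum>i<n. norm (l i *\<^sub>R y i))" by (rule norm_sum)
  also have "\<dots> \<le> (\<Sum>i<n. l i)"
    using assms by (intro sum_mono) (auto intro: mult_left_le)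
  finally show ?thesis using assms by simp
qed

lemma ccs_ball_norm:
  assumes "is_ccs_ball C" "c \<in> C"
  shows "norm c \<le> 1"
proof -
  from assms(1) obtain n :: nat and l :: "nat \<Rightarrow> real" and f :: "nat \<Rightarrow> 'a \<Rightarrow> real" and d :: "nat \<Rightarrow> real" where H: "n \<ge> 1" "\<forall>i<n. 0 < (l i::real) \<and> l i \<le> 1" "(\<Sum>i<n. l i) = 1"
     "\<forall>i<n. bounded_linear (f i) \<and> d i > 0 \<and> ball_slice (f i) (d i) \<noteq> {}"
     "C = {(\<Sum>i<n. l i *\<^sub>R y i) | y. \<forall>i<n. y i \<in> ball_slice (f i) (d i)}"
    unfolding is_ccs_ball_def by blast
  from assms(2) H(5) obtain y where y: "c = (\<Sum>i<n. l i *\<^sub>R y i)" "\<forall>i<n. y i \<in> ball_slice (f i) (d i)"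
    by blast
  show ?thesis unfolding y(1) using H y(2) by (intro ccs_norm) (auto simp: ball_slice_def)
qed

lemma ccs_ball_nonempty:
  assumes "is_ccs_ball C"
  shows "C \<noteq> {}"
proof -
  from assms(1) obtain n :: nat and l :: "nat \<Rightarrow> real" and f :: "nat \<Rightarrow> 'a \<Rightarrow> real" and d :: "nat \<Rightarrow> real" where H: "n \<ge> 1" "\<forall>i<n. 0 < (l i::real) \<and> l i \<le> 1" "(\<Sum>i<n. l i) = 1"
     "\<forall>i<n. bounded_linear (f i) \<and> d i > 0 \<and> ball_slice (f i) (d i) \<noteq> {}"
     "C = {(\<Sum>i<n. l i *\<^sub>R y i) | y. \<forall>i<n. y i \<in> ball_slice (f i) (d i)}"
    unfolding is_ccs_ball_def by blast
  define y where "y i = (SOME z. z \<in> ball_slice (f i) (d i))" for i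
  have "\<forall>i<n. y i \<in> ball_slice (f i) (d i)"
    using H(4) unfolding y_def by (metis ex_in_conv someI_ex)
  then show ?thesis using H(5) by blast
qed

lemma sd2:
  fixes x :: "'a::real_normed_vector" and C :: "'a set"
  assumes xd: "ccs_daugavet_point x" and C: "is_ccs_ball C"
  shows "diameter C = 2"
proof -
  from C obtain n :: nat and l :: "nat \<Rightarrow> real" and f :: "nat \<Rightarrow> 'a \<Rightarrow> real" and d :: "nat \<Rightarrow> real" where H: "n \<ge> 1" "\<forall>i<n. 0 < (l i::real) \<and> l i \<le> 1" "(\<Sum>i<n. l i) = 1"
     "\<forall>i<n. bounded_linear (f i) \<and> d i > 0 \<and> ball_slice (f i) (d i) \<noteq> {}"
     "C = {(\<Sum>i<n. l i *\<^sub>R y i) | y. \<forall>i<n. y i \<in> ball_slice (f i) (d i)}"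
    unfolding is_ccs_ball_def by blast
  have nx: "norm x = 1" and sup: "\<And>D. is_ccs_ball D \<Longrightarrow> (SUP y\<in>D. norm (x - y)) = 2"
    using xd unfolding ccs_daugavet_point_def by auto
  define l2 where "l2 i = (if i < n then l i / 2 else l (i - n) / 2)" for i
  define f2 where "f2 i = (if i < n then f i else (\<lambda>z. - f (i - n) z))" for i
  define d2 where "d2 i = (if i < n then d i else d (i - n))" for i
  define D where "D = {(\<Sum>i<n+n. l2 i *\<^sub>R y i) | y. \<forall>i<n+n. y i \<in> ball_slice (f2 i) (d2 i)}"
  have slD: "i < n + n \<Longrightarrow> y \<in> ball_slice (f2 i) (d2 i) \<longleftrightarrow>
     (if i < n then y \<in> ball_slice (f i) (d i) else - y \<in> ball_slice (f (i-n)) (d (i-n)))" for i y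
    using H(4) unfolding f2_def d2_def by (auto simp: neg_slice)
  have "is_ccs_ball D"
    unfolding is_ccs_ball_def
  proof (intro exI conjI)
    show "1 \<le> n + n" using H(1) by simp
    show "\<forall>i<n + n. 0 < l2 i \<and> l2 i \<le> 1"
    proof (intro allI impI)
      fix i assume "i < n + n"
      then have "i < n \<or> i - n < n" by auto
      then show "0 < l2 i \<and> l2 i \<le> 1" using H(2) unfolding l2_def by fastforce
    qed
    show "(\<Sum>i<n + n. l2 i) = 1" unfolding split_sum2 l2_def using H(3)
      by (simp add: sum_divide_distrib[symmetric])
    show "\<forall>i<n + n. bounded_linear (f2 i) \<and> 0 < d2 i \<and> ball_slice (f2 i) (d2 i) \<noteq> {}"
    proof (intro allI impI conjI)
      fix i assume i: "i < n + n"
      show "bounded_linear (f2 i)" using H(4) i unfolding f2_def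
        by (auto intro: bounded_linear_minus)
      show "0 < d2 i" using H(4) i unfolding d2_def by auto
      show "ball_slice (f2 i) (d2 i) \<noteq> {}"
      proof (cases "i < n")
        case True then show ?thesis using H(4) slD[OF i] by auto
      next
        case False
        then obtain z where "z \<in> ball_slice (f (i-n)) (d (i-n))" using H(4) i by fastforce
        then have "-z \<in> ball_slice (f2 i) (d2 i)" using slD[OF i] False by simp
        then show ?thesis by blast
      qed
    qed
  qed (rule D_def)
  then have supD: "(SUP y\<in>D. norm (x - y)) = 2" by (rule sup)
  have Dne: "D \<noteq> {}" by (rule ccs_ball_nonempty) fact
  have bdd: "bdd_above ((\<lambda>y. norm (x - y)) ` D)"
  proof (rule bdd_aboveI2)
    fix y assume "y \<in> D"
    then have "norm y \<le> 1" using ccs_ball_norm \<open>is_ccs_ball D\<close> by blast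
    then show "norm (x - y) \<le> 2" using norm_triangle_ineq4[of x y] nx by simp
  qed
  have Cb: "bounded C" unfolding bounded_iff using ccs_ball_norm[OF C] by blast
  have ge: "2 - 2 * e \<le> diameter C" if e: "e > 0" for e
  proof -
    have "2 - e < (SUP y\<in>D. norm (x - y))" using supD e by simp
    then obtain dd where dd: "dd \<in> D" "2 - e < norm (x - dd)"
      using less_cSUP_iff[OF Dne bdd] by blast
    then obtain y where y: "dd = (\<Sum>i<n+n. l2 i *\<^sub>R y i)" "\<forall>i<n+n. y i \<in> ball_slice (f2 i) (d2 i)"
      unfolding D_def by blast
    define c1 where "c1 = (\<Sum>i<n. l i *\<^sub>R y i)"
    define c2 where "c2 = (\<Sum>i<n. l i *\<^sub>R (- y (i + n)))"
    have c1: "c1 \<in> C" unfolding H(5) c1_def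
    proof (intro CollectI exI conjI allI impI)
      fix i assume "i < n" then show "y i \<in> ball_slice (f i) (d i)" using y(2)[rule_format, of i] slD[of i] by auto
    qed simp
    have c2: "c2 \<in> C" unfolding H(5) c2_def
    proof (intro CollectI exI conjI allI impI)
      fix i assume "i < n" then show "- y (i + n) \<in> ball_slice (f i) (d i)"
        using y(2)[rule_format, of "i+n"] slD[of "i+n"] by auto
    qed simp
    have "dd = (\<Sum>i<n. (l i / 2) *\<^sub>R y i) + (\<Sum>i<n. (l i / 2) *\<^sub>R y (i + n))"
      unfolding y(1) split_sum2 l2_def by simp
    also have "\<dots> = (1/2) *\<^sub>R (c1 - c2)"
      unfolding c1_def c2_def by (simp add: scaleR_sum_right sum_subtractf[symmetric] sum.distrib[symmetric] algebra_simps)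
    finally have "dd = (1/2) *\<^sub>R (c1 - c2)" .
    then have "norm (c1 - c2) = 2 * norm dd" by simp
    moreover have "norm (x - dd) \<le> 1 + norm dd" using norm_triangle_ineq4[of x dd] nx by simp
    ultimately have "2 - 2 * e < dist c1 c2" using dd(2) by (simp add: dist_norm)
    also have "\<dots> \<le> diameter C" by (rule diameter_bounded_bound[OF Cb c1 c2])
    finally show ?thesis by simp
  qed
  have "2 \<le> diameter C"
  proof (rule field_le_epsilon)
    fix e :: real assume "e > 0"
    then show "2 \<le> diameter C + e" using ge[of "e/2"] by simp
  qed
  moreover have "diameter C \<le> 2"
  proof (rule diameter_le)
    show "C \<noteq> {} \<or> 0 \<le> (2::real)" by simp
    fix a b assume "a \<in> C" "b \<in> C"
    then have "norm a \<le> 1" "norm b \<le> 1" using ccs_ball_norm[OF C] by auto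
    then show "norm (a - b) \<le> 2" using norm_triangle_ineq4[of a b] by simp
  qed
  ultimately show ?thesis by simp
qed

lemma sup_ball:
  fixes f :: "'a::real_normed_vector \<Rightarrow> real"
  assumes f: "bounded_linear f"
  shows "(SUP z\<in>cball 0 1. f z) = onorm f"
proof -
  interpret bounded_linear f by fact
  have bdd: "bdd_above (f ` cball 0 1)"
  proof (rule bdd_aboveI2)
    fix z :: 'a assume "z \<in> cball 0 1"
    then have "norm z \<le> 1" by simp
    have "f z \<le> norm (f z)" by simp
    also have "\<dots> \<le> onorm f * norm z" by (rule onorm[OF f])
    also have "\<dots> \<le> onorm f" using \<open>norm z \<le> 1\<close> onorm_pos_le[OF f] by (simp add: mult_left_le)
    finally show "f z \<le> onorm f" .
  qed
  show ?thesis
  proof (rule antisym)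
    show "(SUP z\<in>cball 0 1. f z) \<le> onorm f"
    proof (rule cSUP_least)
      show "cball (0::'a) 1 \<noteq> {}" by simp
      fix z :: 'a assume "z \<in> cball 0 1"
      then have "norm z \<le> 1" by simp
      have "f z \<le> norm (f z)" by simp
      also have "\<dots> \<le> onorm f * norm z" by (rule onorm[OF f])
      also have "\<dots> \<le> onorm f" using \<open>norm z \<le> 1\<close> onorm_pos_le[OF f] by (simp add: mult_left_le)
      finally show "f z \<le> onorm f" .
    qed
    show "onorm f \<le> (SUP z\<in>cball 0 1. f z)"
    proof (rule onorm_bound)
      have "f 0 \<le> (SUP z\<in>cball 0 1. f z)" using bdd by (intro cSUP_upper) auto
      then show "0 \<le> (SUP z\<in>cball 0 1. f z)" by (simp add: zero)
    next
      fix z :: 'a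
      show "norm (f z) \<le> (SUP z\<in>cball 0 1. f z) * norm z"
      proof (cases "z = 0")
        case True then show ?thesis by (simp add: zero)
      next
        case False
        define s where "s = (if f z \<ge> 0 then 1 else -1) / norm z"
        have "s *\<^sub>R z \<in> cball 0 1" using False unfolding s_def by simp
        then have "f (s *\<^sub>R z) \<le> (SUP z\<in>cball 0 1. f z)" using bdd by (rule cSUP_upper)
        moreover have "f (s *\<^sub>R z) = norm (f z) / norm z"
          unfolding s_def scale by auto
        ultimately show ?thesis using False by (simp add: pos_divide_le_eq)
      qed
    qed
  qed
qed

theorem mainTheorem2:
  fixes x :: "'a::banach"
  assumes "ccs_daugavet_point x"
  shows "strong_diameter_two TYPE('a) \<and> \<not> strongly_regular TYPE('a)"
proof
  show sd: "strong_diameter_two TYPE('a)"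
    unfolding strong_diameter_two_def using sd2[OF assms] by blast
  show "\<not> strongly_regular TYPE('a)"
  proof
    assume "strongly_regular TYPE('a)"
    then obtain C :: "'a set" where C: "is_ccs_of (cball 0 1) C" "diameter C < 1"
      unfolding strongly_regular_def
      by (metis (no_types, lifting) bounded_cball cball_eq_empty closed_cball convex_cball
          zero_less_one not_less zero_le_one)
    have "is_ccs_ball C"
    proof -
      have eq: "bounded_linear g \<Longrightarrow> set_slice (cball 0 1) g dl = ball_slice g dl" for g :: "'a \<Rightarrow> real" and dl
        unfolding set_slice_def ball_slice_def sup_ball by auto
      from C(1) show ?thesis unfolding is_ccs_of_def is_ccs_ball_def
        apply (elim exE conjE)
        subgoal for n l f d
          apply (rule exI[of _ n], rule exI[of _ l], rule exI[of _ f], rule exI[of _ d])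
          using eq by auto
        done
    qed
    then have "diameter C = 2" by (rule sd2[OF assms])
    with C(2) show False by simp
  qed
qed

end
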